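(* Let $P,Q\in\mathbb{C}[z_1,\dots,z_d]$ be nonzero polynomials all of whose coefficients are real and non-negative. Then \[ \|P\,Q\|_a\ge\|P\|_a\,\|Q\|_a . \]
   Context: For multi-indices $\alpha\in\mathbb{N}^d$ write $z^\alpha=z_1^{\alpha_1}\cdots z_d^{\alpha_d}$ and $\alpha!=\alpha_1!\cdots\alpha_d!$. The apolar inner product on $\mathbb{C}[z_1,\dots,z_d]$ is $\langle \sum c_\alpha z^\alpha,\sum d_\alpha z^\alpha\rangle_a=\sum_\alpha\alpha!\,c_\alpha\overline{d_\alpha}$, with norm $\|P\|_a=\sqrt{\langle P,P\rangle_a}$. *)

theory Defs
  imports Complex_Main "HOL-Library.Poly_Mapping"
begin

text \<open>Polynomials in d complex variables z_0,...,z_(d-1) are represented as finitely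
supported maps from multi-indices (poly_mapping nat nat) to complex coefficients;
multiplication is the library's convolution product.\<close>

definition in_vars :: "nat \<Rightarrow> ((nat \<Rightarrow>\<^sub>0 nat) \<Rightarrow>\<^sub>0 complex) \<Rightarrow> bool" where
  "in_vars d P \<longleftrightarrow> (\<forall>a \<in> Poly_Mapping.keys P. Poly_Mapping.keys a \<subseteq> {..<d})"

definition mfact :: "(nat \<Rightarrow>\<^sub>0 nat) \<Rightarrow> real" where
  "mfact \<alpha> = (\<Prod>i\<in>Poly_Mapping.keys \<alpha>. fact (Poly_Mapping.lookup \<alpha> i))"

definition apolar_inner :: "((nat \<Rightarrow>\<^sub>0 nat) \<Rightarrow>\<^sub>0 complex) \<Rightarrow> ((nat \<Rightarrow>\<^sub>0 nat) \<Rightarrow>\<^sub>0 complex) \<Rightarrow> complex" where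
  "apolar_inner P Q = (\<Sum>\<alpha> \<in> Poly_Mapping.keys P \<union> Poly_Mapping.keys Q. of_real (mfact \<alpha>) * Poly_Mapping.lookup P \<alpha> * cnj (Poly_Mapping.lookup Q \<alpha>))"

definition apolar_norm :: "((nat \<Rightarrow>\<^sub>0 nat) \<Rightarrow>\<^sub>0 complex) \<Rightarrow> real" where
  "apolar_norm P = sqrt (Re (apolar_inner P P))"

end

theory Submission
  imports Defs
begin

lemma fact_add_ge: "fact a * fact b \<le> (fact (a + b) :: real)"
proof -
  have "fact a * fact b * ((a+b) choose a) = (fact (a+b) :: nat)"
    using binomial_fact_lemma[of a "a+b"] by (simp add: mult.commute mult.left_commute)
  moreover have "(a+b) choose a \<ge> 1" by (simp add: Suc_leI)
  ultimately have "fact a * fact b \<le> (fact (a+b) :: nat)"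
    by (metis mult.right_neutral mult_le_mono2)
  then show ?thesis by (metis of_nat_fact of_nat_le_iff of_nat_mult)
qed

lemma mfact_superset:
  assumes "finite K" "Poly_Mapping.keys \<alpha> \<subseteq> K"
  shows "mfact \<alpha> = (\<Prod>i\<in>K. fact (Poly_Mapping.lookup \<alpha> i))"
  unfolding mfact_def
  by (rule prod.mono_neutral_left[OF assms(1) assms(2)]) (auto simp: in_keys_iff)

lemma mfact_add: "mfact \<alpha> * mfact \<beta> \<le> mfact (\<alpha> + \<beta>)"
proof -
  let ?K = "Poly_Mapping.keys \<alpha> \<union> Poly_Mapping.keys \<beta>"
  have f: "finite ?K" by simp
  have "mfact \<alpha> * mfact \<beta> = (\<Prod>i\<in>?K. fact (Poly_Mapping.lookup \<alpha> i) * fact (Poly_Mapping.lookup \<beta> i))"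
    by (simp add: mfact_superset[OF f] prod.distrib)
  also have "\<dots> \<le> (\<Prod>i\<in>?K. fact (Poly_Mapping.lookup \<alpha> i + Poly_Mapping.lookup \<beta> i))"
    by (rule prod_mono) (simp add: fact_add_ge)
  also have "\<dots> = mfact (\<alpha> + \<beta>)"
    by (subst mfact_superset[OF f]) (auto simp: lookup_add dest: subsetD[OF keys_add])
  finally show ?thesis .
qed

lemma mfact_pos: "mfact \<alpha> > 0"
  unfolding mfact_def by (rule prod_pos) auto

lemma inner_sq:
  assumes "finite S" "Poly_Mapping.keys F \<subseteq> S"
  shows "Re (apolar_inner F F) = (\<Sum>a\<in>S. mfact a * (cmod (Poly_Mapping.lookup F a))^2)"
proof -
  have "apolar_inner F F = (\<Sum>a\<in>Poly_Mapping.keys F. of_real (mfact a * (cmod (Poly_Mapping.lookup F a))^2))"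
    unfolding apolar_inner_def of_real_mult complex_norm_square by (simp add: mult.assoc)
  then have "Re (apolar_inner F F) = (\<Sum>a\<in>Poly_Mapping.keys F. mfact a * (cmod (Poly_Mapping.lookup F a))^2)"
    by (simp add: Re_sum)
  also have "\<dots> = (\<Sum>a\<in>S. mfact a * (cmod (Poly_Mapping.lookup F a))^2)"
    by (rule sum.mono_neutral_left[OF assms]) (auto simp: in_keys_iff)
  finally show ?thesis .
qed

lemma mult_lookup:
  "Poly_Mapping.lookup (f * g) k =
    (\<Sum>(a,b)\<in>Poly_Mapping.keys f \<times> Poly_Mapping.keys g.
       if k = a + b then Poly_Mapping.lookup f a * Poly_Mapping.lookup g b else 0)"
proof -
  have "Poly_Mapping.lookup (f * g) k = prod_fun (Poly_Mapping.lookup f) (Poly_Mapping.lookup g) k"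
    by (simp add: lookup_mult prod_fun_def)
  also have "\<dots> = (\<Sum>(a, b). Poly_Mapping.lookup f a * Poly_Mapping.lookup g b when k = a + b)"
    by (rule prod_fun_unfold_prod) auto
  also have "\<dots> = (\<Sum>(a,b)\<in>Poly_Mapping.keys f \<times> Poly_Mapping.keys g.
       Poly_Mapping.lookup f a * Poly_Mapping.lookup g b when k = a + b)"
    by (rule Sum_any.expand_superset) (auto simp: in_keys_iff)
  finally show ?thesis by (simp add: when_def case_prod_beta cong: sum.cong)
qed

lemma sq_sum_ge:
  fixes f :: "'a \<Rightarrow> real"
  assumes "finite S" "\<And>x. x \<in> S \<Longrightarrow> f x \<ge> 0"
  shows "(\<Sum>x\<in>S. (f x)^2) \<le> (sum f S)^2"
  using assms
proof (induction S rule: finite_induct)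
  case empty then show ?case by simp
next
  case (insert x F)
  have "0 \<le> f x * sum f F" using insert by (simp add: sum_nonneg)
  then show ?case using insert by (simp add: power2_eq_square algebra_simps)
qed

theorem theorem4p1:
  fixes d :: nat and P Q :: "(nat \<Rightarrow>\<^sub>0 nat) \<Rightarrow>\<^sub>0 complex"
  assumes "in_vars d P" and "in_vars d Q"
    and "P \<noteq> 0" and "Q \<noteq> 0"
    and "\<forall>\<alpha>. Poly_Mapping.lookup P \<alpha> \<in> \<real> \<and> 0 \<le> Re (Poly_Mapping.lookup P \<alpha>)"
    and "\<forall>\<alpha>. Poly_Mapping.lookup Q \<alpha> \<in> \<real> \<and> 0 \<le> Re (Poly_Mapping.lookup Q \<alpha>)"
  shows "apolar_norm (P * Q) \<ge> apolar_norm P * apolar_norm Q"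
proof -
  define A where "A = Poly_Mapping.keys P"
  define B where "B = Poly_Mapping.keys Q"
  define p where "p a = Re (Poly_Mapping.lookup P a)" for a
  define q where "q a = Re (Poly_Mapping.lookup Q a)" for a
  have fA: "finite A" and fB: "finite B" by (simp_all add: A_def B_def)
  have Pp: "Poly_Mapping.lookup P a = of_real (p a)" for a
    using assms(5) p_def by (metis Reals_cases Re_complex_of_real)
  have Qq: "Poly_Mapping.lookup Q a = of_real (q a)" for a
    using assms(6) q_def by (metis Reals_cases Re_complex_of_real)
  have p0: "p a \<ge> 0" for a using assms(5) p_def by simp
  have q0: "q a \<ge> 0" for a using assms(6) q_def by simp
  define C where "C = (\<lambda>(a,b). a + b) ` (A \<times> B)"
  have fC: "finite C" using fA fB by (simp add: C_def)
  have kC: "Poly_Mapping.keys (P * Q) \<subseteq> C"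
    using keys_mult[of P Q] by (auto simp: C_def A_def B_def)
  define t where "t g x = (if g = fst x + snd x then p (fst x) * q (snd x) else 0)" for g x
  have t0: "t g x \<ge> 0" for g x using p0 q0 by (simp add: t_def)
  have PQ: "Poly_Mapping.lookup (P * Q) g = of_real (\<Sum>x\<in>A \<times> B. t g x)" for g
    unfolding mult_lookup A_def[symmetric] B_def[symmetric] of_real_sum
    by (rule sum.cong) (auto simp: t_def Pp Qq)
  have nP: "Re (apolar_inner P P) = (\<Sum>a\<in>A. mfact a * (p a)^2)"
    using inner_sq[of A P] fA p0 by (simp add: A_def Pp)
  have nQ: "Re (apolar_inner Q Q) = (\<Sum>a\<in>B. mfact a * (q a)^2)"
    using inner_sq[of B Q] fB q0 by (simp add: B_def Qq)
  have "Re (apolar_inner (P*Q) (P*Q)) = (\<Sum>g\<in>C. mfact g * (\<Sum>x\<in>A \<times> B. t g x)^2)"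
    using inner_sq[OF fC kC] by (simp add: PQ sum_nonneg t0 of_real_sum[symmetric] del: of_real_sum)
  also have "\<dots> \<ge> (\<Sum>g\<in>C. mfact g * (\<Sum>x\<in>A \<times> B. (t g x)^2))"
    by (rule sum_mono, rule mult_left_mono, rule sq_sum_ge) (auto simp: fA fB t0 mfact_pos less_imp_le)
  moreover have "(\<Sum>g\<in>C. mfact g * (\<Sum>x\<in>A \<times> B. (t g x)^2))
      = (\<Sum>x\<in>A \<times> B. \<Sum>g\<in>C. mfact g * (t g x)^2)"
    by (simp add: sum_distrib_left sum.swap[of _ C])
  moreover have "\<dots> = (\<Sum>x\<in>A \<times> B. mfact (fst x + snd x) * (p (fst x) * q (snd x))^2)"
  proof (rule sum.cong[OF refl])
    fix x assume x: "x \<in> A \<times> B"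
    have "(\<Sum>g\<in>C. mfact g * (t g x)^2) = (\<Sum>g\<in>C. if g = fst x + snd x then mfact (fst x + snd x) * (p (fst x) * q (snd x))^2 else 0)"
      by (rule sum.cong) (auto simp: t_def)
    also have "\<dots> = mfact (fst x + snd x) * (p (fst x) * q (snd x))^2"
      using x fC by (simp add: C_def image_iff) (metis mem_Times_iff)
    finally show "(\<Sum>g\<in>C. mfact g * (t g x)^2) = mfact (fst x + snd x) * (p (fst x) * q (snd x))^2" .
  qed
  moreover have "\<dots> \<ge> (\<Sum>x\<in>A \<times> B. (mfact (fst x) * (p (fst x))^2) * (mfact (snd x) * (q (snd x))^2))"
  proof (rule sum_mono)
    fix x :: "(nat \<Rightarrow>\<^sub>0 nat) \<times> (nat \<Rightarrow>\<^sub>0 nat)"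
    have "mfact (fst x) * mfact (snd x) * ((p (fst x))^2 * (q (snd x))^2)
       \<le> mfact (fst x + snd x) * ((p (fst x))^2 * (q (snd x))^2)"
      by (rule mult_right_mono[OF mfact_add]) simp
    then show "mfact (fst x) * (p (fst x))^2 * (mfact (snd x) * (q (snd x))^2)
       \<le> mfact (fst x + snd x) * (p (fst x) * q (snd x))^2"
      by (simp add: power_mult_distrib algebra_simps)
  qed
  moreover have "(\<Sum>x\<in>A \<times> B. (mfact (fst x) * (p (fst x))^2) * (mfact (snd x) * (q (snd x))^2))
     = Re (apolar_inner P P) * Re (apolar_inner Q Q)"
    by (simp add: nP nQ sum_product sum.cartesian_product case_prod_beta)
  ultimately have main: "Re (apolar_inner P P) * Re (apolar_inner Q Q) \<le> Re (apolar_inner (P*Q) (P*Q))"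
    by linarith
  show ?thesis
    unfolding apolar_norm_def real_sqrt_mult[symmetric]
    by (rule real_sqrt_le_mono[OF main])
qed

end
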